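(* Let $s\ge 1$ and let $P^{(1)},\dots,P^{(s)}\in\mathbb{C}[z_1,\dots,z_d]$ be nonzero polynomials of total degrees $n_1,\dots,n_s$ respectively. Then \[ (n_1+\cdots+n_s)!\,\bigl\|P^{(1)}\cdots P^{(s)}\bigr\|_a^2\;\ge\;\bigl\|P^{(1)}\bigr\|_a^2\cdots\bigl\|P^{(s)}\bigr\|_a^2 . \]
   Context: For multi-indices $\alpha=(\alpha_1,\dots,\alpha_d)\in\mathbb{N}^d$ write $z^\alpha=z_1^{\alpha_1}\cdots z_d^{\alpha_d}$, $\alpha!=\alpha_1!\cdots\alpha_d!$, $|\alpha|=\alpha_1+\cdots+\alpha_d$. The apolar inner product on $\mathbb{C}[z_1,\dots,z_d]$ is defined, for $P=\sum_\alpha c_\alpha z^\alpha$ and $Q=\sum_\alpha d_\alpha z^\alpha$, by $\langle P,Q\rangle_a=\sum_{\alpha\in\mathbb{N}^d}\alpha!\,c_\alpha\overline{d_\alpha}$, and $\|P\|_a=\sqrt{\langle P,P\rangle_a}$. The total degree of $P$ is the largest $|\alpha|$ with $c_\alpha\neq0$. *)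

theory Defs
  imports "HOL-Analysis.Analysis" "HOL-Library.Poly_Mapping"
begin

type_synonym 'v mpoly = "('v \<Rightarrow>\<^sub>0 nat) \<Rightarrow>\<^sub>0 complex"

definition mi_fact :: "('v \<Rightarrow>\<^sub>0 nat) \<Rightarrow> nat" where
  "mi_fact \<alpha> = (\<Prod>v\<in>Poly_Mapping.keys \<alpha>. fact (Poly_Mapping.lookup \<alpha> v))"

definition mi_deg :: "('v \<Rightarrow>\<^sub>0 nat) \<Rightarrow> nat" where
  "mi_deg \<alpha> = (\<Sum>v\<in>Poly_Mapping.keys \<alpha>. Poly_Mapping.lookup \<alpha> v)"

definition total_degree :: "'v mpoly \<Rightarrow> nat" where
  "total_degree P = Max (insert 0 (mi_deg ` Poly_Mapping.keys P))"

definition apolar_inner :: "'v mpoly \<Rightarrow> 'v mpoly \<Rightarrow> complex" where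
  "apolar_inner P Q =
     (\<Sum>\<alpha>\<in>Poly_Mapping.keys P \<union> Poly_Mapping.keys Q. of_nat (mi_fact \<alpha>) * Poly_Mapping.lookup P \<alpha> * cnj (Poly_Mapping.lookup Q \<alpha>))"

definition apolar_norm :: "'v mpoly \<Rightarrow> real" where
  "apolar_norm P = sqrt (Re (apolar_inner P P))"

end

theory Submission
  imports Defs "HOL-Library.Function_Algebras"
begin

definition mdeg :: "('w::finite \<Rightarrow> nat) \<Rightarrow> nat" where "mdeg a = (\<Sum>w\<in>UNIV. a w)"
definition mf :: "('w::finite \<Rightarrow> nat) \<Rightarrow> real" where "mf a = (\<Prod>w\<in>UNIV. fact (a w))"
definition bx :: "nat \<Rightarrow> ('w::finite \<Rightarrow> nat) set" where "bx n = {a. \<forall>w. a w \<le> n}"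
definition dn :: "('w::finite \<Rightarrow> nat) \<Rightarrow> ('w \<Rightarrow> nat) set" where "dn c = {a. a \<le> c}"
definition conv :: "(('w::finite \<Rightarrow> nat) \<Rightarrow> complex) \<Rightarrow> (('w \<Rightarrow> nat) \<Rightarrow> complex) \<Rightarrow> ('w \<Rightarrow> nat) \<Rightarrow> complex"
  where "conv f g c = (\<Sum>a\<in>dn c. f a * g (c - a))"
definition nrm :: "nat \<Rightarrow> (('w::finite \<Rightarrow> nat) \<Rightarrow> complex) \<Rightarrow> real"
  where "nrm n f = (\<Sum>a\<in>bx n. mf a * (cmod (f a))^2)"
definition hom :: "nat \<Rightarrow> (('w::finite \<Rightarrow> nat) \<Rightarrow> complex) \<Rightarrow> bool"
  where "hom n f \<longleftrightarrow> (\<forall>a. f a \<noteq> 0 \<longrightarrow> mdeg a = n)"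

lemma dn_PiE: "dn c = PiE UNIV (\<lambda>w. {..c w})"
  unfolding dn_def PiE_UNIV_domain by (auto simp: Pi_iff le_fun_def)
lemma bx_PiE: "bx n = PiE UNIV (\<lambda>w. {..n})"
  unfolding bx_def PiE_UNIV_domain by (auto simp: Pi_iff)
lemma finite_dn[simp]: "finite (dn (c::'w::finite \<Rightarrow> nat))"
  unfolding dn_PiE by (intro finite_PiE) auto
lemma finite_bx[simp]: "finite (bx n :: ('w::finite \<Rightarrow> nat) set)"
  unfolding bx_PiE by (intro finite_PiE) auto
lemma mf_pos: "mf a > 0"
  unfolding mf_def by (intro prod_pos ballI fact_gt_zero)
lemma mdeg_add: "mdeg (a + b) = mdeg a + mdeg b"
  unfolding mdeg_def by (simp add: sum.distrib)
lemma le_mdeg: "a w \<le> mdeg a"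
  unfolding mdeg_def by (rule member_le_sum) auto
lemma hom_bx: assumes "hom n f" "f a \<noteq> 0" shows "a \<in> bx n"
proof -
  have "mdeg a = n" using assms unfolding hom_def by blast
  then show ?thesis unfolding bx_def using le_mdeg[of a] by simp
qed
lemma nrm_box: assumes "hom n f" "n \<le> K" shows "nrm K f = nrm n f"
proof -
  have "bx n \<subseteq> bx K" using assms(2) by (auto simp: bx_def intro: order_trans)
  then show ?thesis unfolding nrm_def
    by (intro sum.mono_neutral_right) (auto dest: hom_bx[OF assms(1)])
qed
lemma nrm_nonneg: "nrm n f \<ge> 0"
  unfolding nrm_def by (intro sum_nonneg mult_nonneg_nonneg) (auto simp: less_imp_le[OF mf_pos])

lemma hom_conv: assumes "hom n f" "hom m g" shows "hom (n+m) (conv f g)"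
  unfolding hom_def
proof (intro allI impI)
  fix c assume "conv f g c \<noteq> 0"
  then obtain a where a: "a \<in> dn c" "f a * g (c - a) \<noteq> 0" unfolding conv_def
    by (meson sum.not_neutral_contains_not_neutral)
  have "c = a + (c - a)" using a(1) by (auto simp: dn_def le_fun_def fun_eq_iff)
  then have "mdeg c = mdeg a + mdeg (c - a)" by (metis mdeg_add)
  then show "mdeg c = n + m" using a(2) assms by (auto simp: hom_def)
qed

definition vw :: "nat \<Rightarrow> nat \<Rightarrow> nat \<Rightarrow> nat \<Rightarrow> real" where
  "vw c a a' k = (if k \<le> a \<and> k \<le> a' \<and> a + a' \<le> c + k then
     fact a * fact (c-a) * fact a' * fact (c-a') / (fact k * fact (a-k) * fact (a'-k) * fact (c+k-a-a')) else 0)"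

lemma vw_term: assumes "a \<le> c" "a' \<le> c" "k \<le> a'"
  shows "vw c a a' k = real ((a choose k) * ((c-a) choose (a'-k))) * fact a' * fact (c-a')"
proof (cases "k \<le> a \<and> a' - k \<le> c - a")
  case True
  then have e: "c - a - (a' - k) = c + k - a - a'" using assms by simp
  have "real ((a choose k) * ((c-a) choose (a'-k))) = (fact a / (fact k * fact (a-k))) * (fact (c-a) / (fact (a'-k) * fact (c - a - (a'-k))))"
    using True by (simp add: binomial_fact)
  moreover have "k \<le> a \<and> k \<le> a' \<and> a + a' \<le> c + k" using True assms by linarith
  moreover have "\<And>x1 x2 x3 x4 y1 y2 y3 y4::real. (x1*x2*x3*x4)/(y1*y2*y3*y4) = (x1/(y1*y2))*(x2/(y3*y4))*x3*x4"
    by (simp add: divide_inverse inverse_mult_distrib mult_ac)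
  ultimately show ?thesis unfolding vw_def e by simp
next
  case False
  then have "(a choose k) * ((c-a) choose (a'-k)) = 0" by (auto simp: binomial_eq_0)
  moreover have "\<not> (k \<le> a \<and> k \<le> a' \<and> a + a' \<le> c + k)" using False assms by linarith
  then have "vw c a a' k = 0" unfolding vw_def by (simp only: if_False)
  with \<open>(a choose k) * ((c-a) choose (a'-k)) = 0\<close> show ?thesis by simp
qed

lemma vw_sum: assumes "a \<le> c" "a' \<le> c" shows "(\<Sum>k\<le>a'. vw c a a' k) = fact c"
proof -
  have "(\<Sum>k\<le>a'. vw c a a' k) = (\<Sum>k\<le>a'. real ((a choose k) * ((c-a) choose (a'-k)))) * fact a' * fact (c-a')"
    using assms by (simp add: vw_term sum_distrib_right)
  also have "(\<Sum>k\<le>a'. real ((a choose k) * ((c-a) choose (a'-k)))) = real (c choose a')"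
    unfolding of_nat_sum[symmetric] using vandermonde[of a "c-a" a'] assms by (simp del: of_nat_sum)
  also have "real (c choose a') * fact a' * fact (c-a') = fact c"
    using assms by (simp add: binomial_fact field_simps)
  finally show ?thesis .
qed

definition W :: "('w::finite \<Rightarrow> nat) \<Rightarrow> ('w \<Rightarrow> nat) \<Rightarrow> ('w \<Rightarrow> nat) \<Rightarrow> ('w \<Rightarrow> nat) \<Rightarrow> real" where
  "W c a a' \<alpha> = (\<Prod>w\<in>UNIV. vw (c w) (a w) (a' w) (\<alpha> w))"

lemma W_sum: assumes "a \<le> c" "a' \<le> c" shows "(\<Sum>\<alpha>\<in>dn a'. W c a a' \<alpha>) = mf c"
proof -
  have "(\<Sum>\<alpha>\<in>dn a'. W c a a' \<alpha>) = (\<Prod>w\<in>UNIV. \<Sum>k\<le>a' w. vw (c w) (a w) (a' w) k)"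
    unfolding W_def dn_PiE by (subst prod_sum_PiE) auto
  also have "\<dots> = mf c" unfolding mf_def using assms
    by (intro prod.cong refl vw_sum) (auto simp: le_fun_def)
  finally show ?thesis .
qed

lemma W_zero: assumes "\<not> (\<alpha> \<le> a \<and> a + a' \<le> c + \<alpha>)" shows "W c a a' \<alpha> = 0"
proof -
  from assms obtain w where "\<not> (\<alpha> w \<le> a w \<and> a w + a' w \<le> c w + \<alpha> w)"
    by (auto simp: le_fun_def)
  then have "vw (c w) (a w) (a' w) (\<alpha> w) = 0" by (auto simp: vw_def)
  then show ?thesis unfolding W_def by (intro prod_zero) auto
qed

lemma t1: "x+y+z+z' - (x+z) = y+z'" "x+y+z+z' - (x+z') = y+(z::nat)" "x+z-x = z" "x+z'-x=z'"
     "x+y+z+z' + x - (x+z) - (x+z') = y" by simp_all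

lemma vw_phi: "vw (x+y+z+z') (x+z) (x+z') x = fact(x+z)*fact(y+z')*fact(x+z')*fact(y+z)/(fact x * fact z * fact z' * fact y)"
proof -
  have hc: "x \<le> x+z \<and> x \<le> x+z' \<and> x+z + (x+z') \<le> x+y+z+z' + x" by simp
  show ?thesis unfolding vw_def t1 by (simp only: if_P[OF hc])
qed

lemma W_phi: "W (\<alpha>+\<beta>+\<gamma>+\<gamma>') (\<alpha>+\<gamma>) (\<alpha>+\<gamma>') \<alpha> =
   mf (\<alpha>+\<gamma>) * mf (\<beta>+\<gamma>') * mf (\<alpha>+\<gamma>') * mf (\<beta>+\<gamma>) / (mf \<alpha> * mf \<gamma> * mf \<gamma>' * mf \<beta>)"
proof -
  have "W (\<alpha>+\<beta>+\<gamma>+\<gamma>') (\<alpha>+\<gamma>) (\<alpha>+\<gamma>') \<alpha> = (\<Prod>w\<in>UNIV.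
     fact ((\<alpha>+\<gamma>) w) * fact ((\<beta>+\<gamma>') w) * fact ((\<alpha>+\<gamma>') w) * fact ((\<beta>+\<gamma>) w) /
     (fact (\<alpha> w) * fact (\<gamma> w) * fact (\<gamma>' w) * fact (\<beta> w)))"
    unfolding W_def by (intro prod.cong refl) (simp only: vw_phi plus_fun_apply)
  also have "\<dots> = mf (\<alpha>+\<gamma>) * mf (\<beta>+\<gamma>') * mf (\<alpha>+\<gamma>') * mf (\<beta>+\<gamma>) / (mf \<alpha> * mf \<gamma> * mf \<gamma>' * mf \<beta>)"
    unfolding mf_def by (simp only: prod_dividef prod.distrib)
  finally show ?thesis .
qed


lemma sum_Sigma4:
  assumes "finite A" "\<And>x. finite (B x)" "\<And>x y. finite (C x y)" "\<And>x y z. finite (D x y z)"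
  shows "(\<Sum>x\<in>A. \<Sum>y\<in>B x. \<Sum>z\<in>C x y. \<Sum>w\<in>D x y z. h (x,y,z,w)) =
         sum h {(x,y,z,w). x\<in>A \<and> y\<in>B x \<and> z\<in>C x y \<and> w\<in>D x y z}"
proof -
  have "(\<Sum>x\<in>A. \<Sum>y\<in>B x. \<Sum>z\<in>C x y. \<Sum>w\<in>D x y z. h (x,y,z,w)) =
        (\<Sum>x\<in>A. \<Sum>y\<in>B x. \<Sum>zw\<in>Sigma (C x y) (D x y). h (x,y,zw))"
    using assms by (simp add: sum.Sigma)
  also have "\<dots> = (\<Sum>x\<in>A. \<Sum>yzw\<in>Sigma (B x) (\<lambda>y. Sigma (C x y) (D x y)). h (x,yzw))"
    using assms by (simp add: sum.Sigma)
  also have "\<dots> = (\<Sum>xyzw\<in>Sigma A (\<lambda>x. Sigma (B x) (\<lambda>y. Sigma (C x y) (D x y))). h xyzw)"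
    using assms by (simp add: sum.Sigma)
  also have "Sigma A (\<lambda>x. Sigma (B x) (\<lambda>y. Sigma (C x y) (D x y))) = {(x,y,z,w). x\<in>A \<and> y\<in>B x \<and> z\<in>C x y \<and> w\<in>D x y z}"
    by auto
  finally show ?thesis .
qed

definition Xf :: "(('w::finite \<Rightarrow> nat) \<Rightarrow> complex) \<Rightarrow> (('w \<Rightarrow> nat) \<Rightarrow> complex) \<Rightarrow> ('w \<Rightarrow> nat) \<Rightarrow> ('w \<Rightarrow> nat) \<Rightarrow> ('w \<Rightarrow> nat) \<Rightarrow> complex"
  where "Xf f g c a a' = f a * g (c-a) * cnj (f a') * cnj (g (c - a'))"
definition Zf where "Zf f g u = (case u of (c,a,a',\<alpha>) \<Rightarrow> of_real (W c a a' \<alpha>) * Xf f g c a a')"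
definition Af :: "(('w::finite \<Rightarrow> nat) \<Rightarrow> complex) \<Rightarrow> (('w \<Rightarrow> nat) \<Rightarrow> complex) \<Rightarrow> ('w \<Rightarrow> nat) \<Rightarrow> ('w \<Rightarrow> nat) \<Rightarrow> ('w \<Rightarrow> nat) \<Rightarrow> complex"
  where "Af f g \<alpha> \<beta> \<gamma> = f (\<alpha>+\<gamma>) * cnj (g (\<beta>+\<gamma>)) * of_real (mf (\<alpha>+\<gamma>) * mf (\<beta>+\<gamma>) / mf \<gamma>)"
definition phi :: "('w \<Rightarrow> nat) \<times> ('w \<Rightarrow> nat) \<times> ('w \<Rightarrow> nat) \<times> ('w \<Rightarrow> nat) \<Rightarrow> ('w \<Rightarrow> nat) \<times> ('w \<Rightarrow> nat) \<times> ('w \<Rightarrow> nat) \<times> ('w \<Rightarrow> nat)"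
  where "phi t = (case t of (\<alpha>,\<beta>,\<gamma>,\<gamma>') \<Rightarrow> (\<alpha>+\<beta>+\<gamma>+\<gamma>', \<alpha>+\<gamma>, \<alpha>+\<gamma>', \<alpha>))"

lemma L1:
  fixes f g :: "('w::finite \<Rightarrow> nat) \<Rightarrow> complex"
  shows "(\<Sum>c\<in>bx N. of_real (mf c) * (conv f g c * cnj (conv f g c))) =
    sum (Zf f g) {(c,a,a',\<alpha>). c \<in> bx N \<and> a \<in> dn c \<and> a' \<in> dn c \<and> \<alpha> \<in> dn a'}"
proof -
  have "of_real (mf c) * (conv f g c * cnj (conv f g c)) =
        (\<Sum>a\<in>dn c. \<Sum>a'\<in>dn c. \<Sum>\<alpha>\<in>dn a'. Zf f g (c,a,a',\<alpha>))" for c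
  proof -
    have "conv f g c * cnj (conv f g c) = (\<Sum>a\<in>dn c. \<Sum>a'\<in>dn c. Xf f g c a a')"
      unfolding conv_def Xf_def cnj_sum sum_product by (simp add: mult_ac)
    then have "of_real (mf c) * (conv f g c * cnj (conv f g c)) = (\<Sum>a\<in>dn c. \<Sum>a'\<in>dn c. of_real (mf c) * Xf f g c a a')"
      by (simp add: sum_distrib_left)
    also have "\<dots> = (\<Sum>a\<in>dn c. \<Sum>a'\<in>dn c. \<Sum>\<alpha>\<in>dn a'. Zf f g (c,a,a',\<alpha>))"
    proof (intro sum.cong refl)
      fix a a' assume "a \<in> dn c" "a' \<in> dn c"
      then have "mf c = (\<Sum>\<alpha>\<in>dn a'. W c a a' \<alpha>)" by (intro W_sum[symmetric]) (auto simp: dn_def)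
      then show "of_real (mf c) * Xf f g c a a' = (\<Sum>\<alpha>\<in>dn a'. Zf f g (c,a,a',\<alpha>))"
        by (simp add: Zf_def sum_distrib_right)
    qed
    finally show ?thesis .
  qed
  then have "(\<Sum>c\<in>bx N. of_real (mf c) * (conv f g c * cnj (conv f g c))) =
     (\<Sum>c\<in>bx N. \<Sum>a\<in>dn c. \<Sum>a'\<in>dn c. \<Sum>\<alpha>\<in>dn a'. Zf f g (c,a,a',\<alpha>))" by simp
  also have "\<dots> = sum (Zf f g) {(c,a,a',\<alpha>). c \<in> bx N \<and> a \<in> dn c \<and> a' \<in> dn c \<and> \<alpha> \<in> dn a'}"
    by (rule sum_Sigma4) auto
  finally show ?thesis .
qed

definition hR where "hR f g t = (case t of (\<alpha>,\<beta>,\<gamma>,\<gamma>') \<Rightarrow>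
   of_real (1/(mf \<alpha> * mf \<beta>)) * (Af f g \<alpha> \<beta> \<gamma> * cnj (Af f g \<alpha> \<beta> \<gamma>')))"

lemma R1:
  fixes f g :: "('w::finite \<Rightarrow> nat) \<Rightarrow> complex"
  shows "(\<Sum>\<alpha>\<in>bx K. \<Sum>\<beta>\<in>bx K. of_real (1/(mf \<alpha> * mf \<beta>)) *
            ((\<Sum>\<gamma>\<in>bx K. Af f g \<alpha> \<beta> \<gamma>) * cnj (\<Sum>\<gamma>\<in>bx K. Af f g \<alpha> \<beta> \<gamma>))) =
         sum (hR f g) {(\<alpha>,\<beta>,\<gamma>,\<gamma>'). \<alpha> \<in> bx K \<and> \<beta> \<in> bx K \<and> \<gamma> \<in> bx K \<and> \<gamma>' \<in> bx K}"
proof -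
  have "of_real (1/(mf \<alpha> * mf \<beta>)) * ((\<Sum>\<gamma>\<in>bx K. Af f g \<alpha> \<beta> \<gamma>) * cnj (\<Sum>\<gamma>\<in>bx K. Af f g \<alpha> \<beta> \<gamma>))
     = (\<Sum>\<gamma>\<in>bx K. \<Sum>\<gamma>'\<in>bx K. hR f g (\<alpha>,\<beta>,\<gamma>,\<gamma>'))" for \<alpha> \<beta>
    unfolding cnj_sum sum_product hR_def by (simp add: sum_distrib_left)
  then have "(\<Sum>\<alpha>\<in>bx K. \<Sum>\<beta>\<in>bx K. of_real (1/(mf \<alpha> * mf \<beta>)) *
            ((\<Sum>\<gamma>\<in>bx K. Af f g \<alpha> \<beta> \<gamma>) * cnj (\<Sum>\<gamma>\<in>bx K. Af f g \<alpha> \<beta> \<gamma>))) =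
     (\<Sum>\<alpha>\<in>bx K. \<Sum>\<beta>\<in>bx K. \<Sum>\<gamma>\<in>bx K. \<Sum>\<gamma>'\<in>bx K. hR f g (\<alpha>,\<beta>,\<gamma>,\<gamma>'))" by simp
  also have "\<dots> = sum (hR f g) {(\<alpha>,\<beta>,\<gamma>,\<gamma>'). \<alpha> \<in> bx K \<and> \<beta> \<in> bx K \<and> \<gamma> \<in> bx K \<and> \<gamma>' \<in> bx K}"
    by (rule sum_Sigma4) auto
  finally show ?thesis .
qed

lemma fun_sub1: "(\<alpha>+\<beta>+\<gamma>+\<gamma>') - (\<alpha>+\<gamma>) = (\<beta>+\<gamma>' :: 'w \<Rightarrow> nat)"
  by (rule ext) (simp only: plus_fun_apply fun_diff_def t1)
lemma fun_sub2: "(\<alpha>+\<beta>+\<gamma>+\<gamma>') - (\<alpha>+\<gamma>') = (\<beta>+\<gamma> :: 'w \<Rightarrow> nat)"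
  by (rule ext) (simp only: plus_fun_apply fun_diff_def t1)

lemma R2: "Zf f g (phi t) = hR f g t"
proof -
  obtain \<alpha> \<beta> \<gamma> \<gamma>' where t: "t = (\<alpha>,\<beta>,\<gamma>,\<gamma>')" by (cases t) auto
  have pos: "mf \<alpha> \<noteq> 0" "mf \<beta> \<noteq> 0" "mf \<gamma> \<noteq> 0" "mf \<gamma>' \<noteq> 0" using mf_pos[of \<alpha>] mf_pos[of \<beta>] mf_pos[of \<gamma>] mf_pos[of \<gamma>'] by simp_all
  have "W (\<alpha>+\<beta>+\<gamma>+\<gamma>') (\<alpha>+\<gamma>) (\<alpha>+\<gamma>') \<alpha> = 1/(mf \<alpha> * mf \<beta>) * (mf (\<alpha>+\<gamma>) * mf (\<beta>+\<gamma>) / mf \<gamma>) * (mf (\<alpha>+\<gamma>') * mf (\<beta>+\<gamma>') / mf \<gamma>')"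
    unfolding W_phi using pos by (simp add: field_simps)
  moreover have "Xf f g (\<alpha>+\<beta>+\<gamma>+\<gamma>') (\<alpha>+\<gamma>) (\<alpha>+\<gamma>') = f (\<alpha>+\<gamma>) * g (\<beta>+\<gamma>') * cnj (f (\<alpha>+\<gamma>')) * cnj (g (\<beta>+\<gamma>))"
    unfolding Xf_def fun_sub1 fun_sub2 by (rule refl)
  ultimately show ?thesis unfolding t phi_def Zf_def hR_def Af_def
    by (simp add: mult_ac)
qed

lemma inj_phi: "inj phi"
proof (rule injI)
  fix t t' assume h: "phi t = phi t'"
  obtain \<alpha> \<beta> \<gamma> \<gamma>' where t: "t = (\<alpha>,\<beta>,\<gamma>,\<gamma>')" by (cases t) auto
  obtain \<alpha>2 \<beta>2 \<gamma>2 \<gamma>2' where t': "t' = (\<alpha>2,\<beta>2,\<gamma>2,\<gamma>2')" by (cases t') auto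
  from h have "(\<alpha>+\<beta>+\<gamma>+\<gamma>', \<alpha>+\<gamma>, \<alpha>+\<gamma>', \<alpha>) = (\<alpha>2+\<beta>2+\<gamma>2+\<gamma>2', \<alpha>2+\<gamma>2, \<alpha>2+\<gamma>2', \<alpha>2)"
    unfolding t t' phi_def by (simp only: prod.case)
  then have e0: "\<alpha>+\<beta>+\<gamma>+\<gamma>' = \<alpha>2+\<beta>2+\<gamma>2+\<gamma>2' \<and> \<alpha>+\<gamma> = \<alpha>2+\<gamma>2 \<and> \<alpha>+\<gamma>' = \<alpha>2+\<gamma>2' \<and> \<alpha> = \<alpha>2"
    by (metis prod.inject)
  have e: "\<alpha>+\<beta>+\<gamma>+\<gamma>' = \<alpha>2+\<beta>2+\<gamma>2+\<gamma>2'" "\<alpha>+\<gamma> = \<alpha>2+\<gamma>2" "\<alpha>+\<gamma>' = \<alpha>2+\<gamma>2'" "\<alpha> = \<alpha>2"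
    using e0 by blast+
  have "\<alpha> w = \<alpha>2 w \<and> \<beta> w = \<beta>2 w \<and> \<gamma> w = \<gamma>2 w \<and> \<gamma>' w = \<gamma>2' w" for w
    using fun_cong[OF e(1), of w] fun_cong[OF e(2), of w] fun_cong[OF e(3), of w] fun_cong[OF e(4), of w]
    by (simp only: plus_fun_apply) linarith
  then show "t = t'" unfolding t t' by (simp add: fun_eq_iff)
qed

definition SL :: "nat \<Rightarrow> (('w::finite \<Rightarrow> nat) \<times> ('w \<Rightarrow> nat) \<times> ('w \<Rightarrow> nat) \<times> ('w \<Rightarrow> nat)) set"
  where "SL N = {(c,a,a',\<alpha>). c \<in> bx N \<and> a \<in> dn c \<and> a' \<in> dn c \<and> \<alpha> \<in> dn a'}"
definition SR :: "nat \<Rightarrow> (('w::finite \<Rightarrow> nat) \<times> ('w \<Rightarrow> nat) \<times> ('w \<Rightarrow> nat) \<times> ('w \<Rightarrow> nat)) set"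
  where "SR K = {(\<alpha>,\<beta>,\<gamma>,\<gamma>'). \<alpha> \<in> bx K \<and> \<beta> \<in> bx K \<and> \<gamma> \<in> bx K \<and> \<gamma>' \<in> bx K}"

lemma finite_SL: "finite (SL N :: (('w::finite \<Rightarrow> nat) \<times> _) set)"
proof -
  have "SL N \<subseteq> bx N \<times> bx N \<times> bx N \<times> (bx N :: ('w \<Rightarrow> nat) set)"
    unfolding SL_def dn_def bx_def le_fun_def by (clarsimp, meson le_trans)
  then show ?thesis by (rule finite_subset) simp
qed
lemma finite_SR: "finite (SR K :: (('w::finite \<Rightarrow> nat) \<times> _) set)"
proof -
  have "SR K = bx K \<times> bx K \<times> bx K \<times> (bx K :: ('w \<Rightarrow> nat) set)"
    unfolding SR_def by auto
  then show ?thesis by simp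
qed

lemma Xf_nz: "Xf f g c a a' \<noteq> 0 \<Longrightarrow> f a \<noteq> 0 \<and> g (c - a) \<noteq> 0 \<and> f a' \<noteq> 0"
  unfolding Xf_def by auto

lemma keyA:
  assumes supp: "\<And>a. f a \<noteq> 0 \<Longrightarrow> a \<in> bx K" "\<And>b. g b \<noteq> 0 \<Longrightarrow> b \<in> bx K"
    and u: "u \<in> SL N" and z: "Zf f g u \<noteq> 0"
  shows "u \<in> phi ` SR K"
proof -
  obtain c a a' \<alpha> where ud: "u = (c,a,a',\<alpha>)" by (cases u) auto
  have Wn: "W c a a' \<alpha> \<noteq> 0" and Xn: "Xf f g c a a' \<noteq> 0" using z unfolding ud Zf_def by auto
  have h1: "\<alpha> \<le> a \<and> a + a' \<le> c + \<alpha>" using Wn W_zero by blast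
  have h2: "a \<le> c" "a' \<le> c" "\<alpha> \<le> a'" using u unfolding ud SL_def dn_def by auto
  have h3: "a \<in> bx K" "c - a \<in> bx K" "a' \<in> bx K" using Xf_nz[OF Xn] supp by auto
  define \<beta> where "\<beta> = (\<lambda>w. c w + \<alpha> w - a w - a' w)"
  define \<gamma> where "\<gamma> = (\<lambda>w. a w - \<alpha> w)"
  define \<gamma>' where "\<gamma>' = (\<lambda>w. a' w - \<alpha> w)"
  have pw: "\<alpha> w \<le> a w" "a w + a' w \<le> c w + \<alpha> w" "a w \<le> c w" "a' w \<le> c w" "\<alpha> w \<le> a' w"
     "a w \<le> K" "c w - a w \<le> K" "a' w \<le> K" for w
    using h1 h2 h3 unfolding le_fun_def bx_def plus_fun_apply fun_diff_def by auto
  have c1: "\<alpha>+\<beta>+\<gamma>+\<gamma>' = c"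
  proof (rule ext)
    fix w show "(\<alpha>+\<beta>+\<gamma>+\<gamma>') w = c w" using pw[of w] unfolding plus_fun_apply \<beta>_def \<gamma>_def \<gamma>'_def by arith
  qed
  have c2: "\<alpha>+\<gamma> = a"
  proof (rule ext)
    fix w show "(\<alpha>+\<gamma>) w = a w" using pw[of w] unfolding plus_fun_apply \<gamma>_def by arith
  qed
  have c3: "\<alpha>+\<gamma>' = a'"
  proof (rule ext)
    fix w show "(\<alpha>+\<gamma>') w = a' w" using pw[of w] unfolding plus_fun_apply \<gamma>'_def by arith
  qed
  have "phi (\<alpha>,\<beta>,\<gamma>,\<gamma>') = u"
    unfolding ud phi_def by (simp only: prod.case c1 c2 c3)
  have "\<alpha> w \<le> K \<and> \<beta> w \<le> K \<and> \<gamma> w \<le> K \<and> \<gamma>' w \<le> K" for w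
    using pw[of w] unfolding \<beta>_def \<gamma>_def \<gamma>'_def by arith
  then have "(\<alpha>,\<beta>,\<gamma>,\<gamma>') \<in> SR K"
    unfolding SR_def bx_def by simp
  moreover note \<open>phi (\<alpha>,\<beta>,\<gamma>,\<gamma>') = u\<close>
  ultimately show ?thesis by blast
qed

lemma keyB:
  assumes supp: "\<And>a. f a \<noteq> 0 \<Longrightarrow> a \<in> bx K" "\<And>b. g b \<noteq> 0 \<Longrightarrow> b \<in> bx K"
    and z: "Zf f g (phi t) \<noteq> 0"
  shows "phi t \<in> SL (2*K)"
proof -
  obtain \<alpha> \<beta> \<gamma> \<gamma>' where t: "t = (\<alpha>,\<beta>,\<gamma>,\<gamma>')" by (cases t) auto
  have "Xf f g (\<alpha>+\<beta>+\<gamma>+\<gamma>') (\<alpha>+\<gamma>) (\<alpha>+\<gamma>') \<noteq> 0" using z unfolding t phi_def Zf_def by auto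
  from Xf_nz[OF this] have "\<alpha>+\<gamma> \<in> bx K" "\<beta>+\<gamma>' \<in> bx K" using supp unfolding fun_sub1 by auto
  then have A: "\<alpha> w + \<gamma> w \<le> K" "\<beta> w + \<gamma>' w \<le> K" for w unfolding bx_def by auto
  have "\<alpha> w + \<beta> w + \<gamma> w + \<gamma>' w \<le> 2*K" for w using A[of w] by arith
  then show ?thesis unfolding t phi_def SL_def bx_def dn_def le_fun_def by auto
qed

lemma L_eq_R:
  fixes f g :: "('w::finite \<Rightarrow> nat) \<Rightarrow> complex"
  assumes supp: "\<And>a. f a \<noteq> 0 \<Longrightarrow> a \<in> bx K" "\<And>b. g b \<noteq> 0 \<Longrightarrow> b \<in> bx K"
  shows "sum (Zf f g) (SL (2*K)) = sum (hR f g) (SR K)"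
proof -
  let ?I = "SL (2*K) \<inter> phi ` SR K :: (('w \<Rightarrow> nat) \<times> ('w \<Rightarrow> nat) \<times> ('w \<Rightarrow> nat) \<times> ('w \<Rightarrow> nat)) set"
  have "sum (hR f g) (SR K) = sum (Zf f g \<circ> phi) (SR K)" by (simp add: R2)
  also have "\<dots> = sum (Zf f g) (phi ` SR K)"
    by (rule sum.reindex[symmetric]) (rule inj_on_subset[OF inj_phi], simp)
  also have "\<dots> = sum (Zf f g) ?I"
  proof (rule sum.mono_neutral_right)
    show "finite (phi ` SR K)" by (simp add: finite_SR)
    show "?I \<subseteq> phi ` SR K" by blast
    show "\<forall>i\<in>phi ` SR K - ?I. Zf f g i = 0"
    proof
      fix i assume i: "i \<in> phi ` SR K - ?I"
      then obtain t where "i = phi t" "t \<in> SR K" by blast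
      with i keyB[OF supp] show "Zf f g i = 0" by blast
    qed
  qed
  also have "\<dots> = sum (Zf f g) (SL (2*K))"
  proof (rule sum.mono_neutral_left)
    show "finite (SL (2*K))" by (simp add: finite_SL)
    show "?I \<subseteq> SL (2*K)" by blast
    show "\<forall>i\<in>SL (2*K) - ?I. Zf f g i = 0"
      using keyA[OF supp] by blast
  qed
  finally show ?thesis ..
qed

lemma mf_zero: "mf (0::'w::finite \<Rightarrow> nat) = 1"
  unfolding mf_def by simp

lemma mdeg_pos: assumes "\<gamma> \<noteq> 0" shows "mdeg \<gamma> > 0"
proof -
  from assms obtain w where "\<gamma> w \<noteq> 0" by (auto simp: fun_eq_iff)
  then show ?thesis using le_mdeg[of \<gamma> w] by simp
qed

lemma Q_top:
  fixes f g :: "('w::finite \<Rightarrow> nat) \<Rightarrow> complex"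
  assumes hf: "hom n f" and fa: "f \<alpha> \<noteq> 0"
  shows "(\<Sum>\<gamma>\<in>bx K. Af f g \<alpha> \<beta> \<gamma>) = f \<alpha> * cnj (g \<beta>) * of_real (mf \<alpha> * mf \<beta>)"
proof -
  have z: "Af f g \<alpha> \<beta> \<gamma> = 0" if "\<gamma> \<noteq> 0" for \<gamma>
  proof -
    have "mdeg (\<alpha>+\<gamma>) \<noteq> n" using mdeg_pos[OF that] hf fa unfolding mdeg_add hom_def by auto
    then have "f (\<alpha>+\<gamma>) = 0" using hf unfolding hom_def by blast
    then show ?thesis unfolding Af_def by simp
  qed
  have "(\<Sum>\<gamma>\<in>bx K. Af f g \<alpha> \<beta> \<gamma>) = (\<Sum>\<gamma>\<in>{0}. Af f g \<alpha> \<beta> \<gamma>)"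
  proof (rule sum.mono_neutral_right)
    show "finite (bx K :: ('w \<Rightarrow> nat) set)" by simp
    show "{0} \<subseteq> (bx K :: ('w \<Rightarrow> nat) set)" by (simp add: bx_def)
    show "\<forall>\<gamma>\<in>bx K - {0}. Af f g \<alpha> \<beta> \<gamma> = 0" using z by simp
  qed
  also have "\<dots> = f \<alpha> * cnj (g \<beta>) * of_real (mf \<alpha> * mf \<beta>)"
    unfolding Af_def by (simp add: mf_zero)
  finally show ?thesis .
qed

lemma core:
  fixes f g :: "('w::finite \<Rightarrow> nat) \<Rightarrow> complex"
  assumes hf: "hom n f" and hg: "hom m g"
  shows "nrm (n+m) (conv f g) \<ge> nrm n f * nrm m g"
proof -
  define K where "K = n + m"
  have supp: "\<And>a. f a \<noteq> 0 \<Longrightarrow> a \<in> bx K" "\<And>b. g b \<noteq> 0 \<Longrightarrow> b \<in> bx K"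
  proof -
    have "bx n \<subseteq> (bx K :: ('w \<Rightarrow> nat) set)" "bx m \<subseteq> (bx K :: ('w \<Rightarrow> nat) set)"
      unfolding bx_def K_def by (auto intro: trans_le_add1 trans_le_add2)
    then show "\<And>a. f a \<noteq> 0 \<Longrightarrow> a \<in> bx K" "\<And>b. g b \<noteq> 0 \<Longrightarrow> b \<in> bx K"
      using hom_bx[OF hf] hom_bx[OF hg] by blast+
  qed
  define Q where "Q \<alpha> \<beta> = (\<Sum>\<gamma>\<in>bx K. Af f g \<alpha> \<beta> \<gamma>)" for \<alpha> \<beta>
  have "complex_of_real (nrm (2*K) (conv f g)) = (\<Sum>c\<in>bx (2*K). of_real (mf c) * (conv f g c * cnj (conv f g c)))"
    unfolding nrm_def of_real_sum by (simp only: of_real_mult complex_norm_square)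
  also have "\<dots> = sum (Zf f g) (SL (2*K))" unfolding L1 SL_def ..
  also have "\<dots> = sum (hR f g) (SR K)" by (rule L_eq_R[OF supp])
  also have "\<dots> = (\<Sum>\<alpha>\<in>bx K. \<Sum>\<beta>\<in>bx K. of_real (1/(mf \<alpha> * mf \<beta>)) * (Q \<alpha> \<beta> * cnj (Q \<alpha> \<beta>)))"
    unfolding Q_def R1 SR_def ..
  also have "\<dots> = of_real (\<Sum>\<alpha>\<in>bx K. \<Sum>\<beta>\<in>bx K. (cmod (Q \<alpha> \<beta>))^2 / (mf \<alpha> * mf \<beta>))"
    unfolding of_real_sum of_real_divide complex_norm_square by (simp add: field_simps)
  finally have eq: "nrm (2*K) (conv f g) = (\<Sum>\<alpha>\<in>bx K. \<Sum>\<beta>\<in>bx K. (cmod (Q \<alpha> \<beta>))^2 / (mf \<alpha> * mf \<beta>))"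
    using of_real_eq_iff by blast
  have trm: "(cmod (Q \<alpha> \<beta>))^2 / (mf \<alpha> * mf \<beta>) \<ge> (mf \<alpha> * (cmod (f \<alpha>))^2) * (mf \<beta> * (cmod (g \<beta>))^2)" for \<alpha> \<beta>
  proof (cases "f \<alpha> = 0")
    case True
    then show ?thesis using mf_pos[of \<alpha>] mf_pos[of \<beta>] by simp
  next
    case False
    have "Q \<alpha> \<beta> = f \<alpha> * cnj (g \<beta>) * of_real (mf \<alpha> * mf \<beta>)" unfolding Q_def by (rule Q_top[OF hf False])
    then have "(cmod (Q \<alpha> \<beta>))^2 = (cmod (f \<alpha>))^2 * (cmod (g \<beta>))^2 * (mf \<alpha> * mf \<beta>)^2"
      using mf_pos[of \<alpha>] mf_pos[of \<beta>] by (simp add: norm_mult power_mult_distrib)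
    then show ?thesis using mf_pos[of \<alpha>] mf_pos[of \<beta>] by (simp add: power2_eq_square field_simps)
  qed
  have "nrm K f * nrm K g = (\<Sum>\<alpha>\<in>bx K. \<Sum>\<beta>\<in>bx K. (mf \<alpha> * (cmod (f \<alpha>))^2) * (mf \<beta> * (cmod (g \<beta>))^2))"
    unfolding nrm_def sum_product ..
  also have "\<dots> \<le> nrm (2*K) (conv f g)" unfolding eq
    by (intro sum_mono trm)
  finally have "nrm K f * nrm K g \<le> nrm (2*K) (conv f g)" .
  moreover have "nrm (2*K) (conv f g) = nrm (n+m) (conv f g)"
    by (rule nrm_box[OF hom_conv[OF hf hg]]) (simp add: K_def)
  moreover have "nrm K f = nrm n f" by (rule nrm_box[OF hf]) (simp add: K_def)
  moreover have "nrm K g = nrm m g" by (rule nrm_box[OF hg]) (simp add: K_def)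
  ultimately show ?thesis by simp
qed


lemma sum_option: "(\<Sum>x\<in>(UNIV::'v::finite option set). h x) = h None + (\<Sum>v\<in>UNIV. h (Some v))"
proof -
  have "(\<Sum>x\<in>(UNIV::'v option set). h x) = (\<Sum>x\<in>insert None (range Some). h x)"
    by (simp only: UNIV_option_conv)
  also have "\<dots> = h None + (\<Sum>x\<in>range Some. h x)" by (subst sum.insert) auto
  also have "(\<Sum>x\<in>range Some. h x) = (\<Sum>v\<in>UNIV. h (Some v))" by (subst sum.reindex) auto
  finally show ?thesis .
qed

lemma prod_option: "(\<Prod>x\<in>(UNIV::'v::finite option set). h x) = h None * (\<Prod>v\<in>UNIV. h (Some v))"
proof -
  have "(\<Prod>x\<in>(UNIV::'v option set). h x) = (\<Prod>x\<in>insert None (range Some). h x)"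
    by (simp only: UNIV_option_conv)
  also have "\<dots> = h None * (\<Prod>x\<in>range Some. h x)" by (subst prod.insert) auto
  also have "(\<Prod>x\<in>range Some. h x) = (\<Prod>v\<in>UNIV. h (Some v))" by (subst prod.reindex) auto
  finally show ?thesis .
qed

definition res :: "('v option \<Rightarrow> nat) \<Rightarrow> ('v \<Rightarrow> nat)" where "res A = (\<lambda>v. A (Some v))"
definition hx :: "nat \<Rightarrow> ('v::finite \<Rightarrow> nat) \<Rightarrow> ('v option \<Rightarrow> nat)" where
  "hx n a = (\<lambda>x. case x of None \<Rightarrow> n - mdeg a | Some v \<Rightarrow> a v)"
definition H :: "nat \<Rightarrow> (('v::finite \<Rightarrow> nat) \<Rightarrow> complex) \<Rightarrow> ('v option \<Rightarrow> nat) \<Rightarrow> complex" where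
  "H n f A = (if mdeg A = n then f (res A) else 0)"
definition lowdeg :: "nat \<Rightarrow> (('v::finite \<Rightarrow> nat) \<Rightarrow> complex) \<Rightarrow> bool" where
  "lowdeg n f \<longleftrightarrow> (\<forall>a. f a \<noteq> 0 \<longrightarrow> mdeg a \<le> n)"

lemma mdeg_opt: "mdeg (A :: 'v::finite option \<Rightarrow> nat) = A None + mdeg (res A)"
  unfolding mdeg_def res_def by (rule sum_option)
lemma mf_opt: "mf (A :: 'v::finite option \<Rightarrow> nat) = fact (A None) * mf (res A)"
  unfolding mf_def res_def by (rule prod_option)
lemma res_hx[simp]: "res (hx n a) = a"
  unfolding res_def hx_def by simp
lemma hx_None[simp]: "hx n a None = n - mdeg a"
  unfolding hx_def by simp
lemma mdeg_hx: "mdeg a \<le> n \<Longrightarrow> mdeg (hx n a) = n"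
  unfolding mdeg_opt by simp
lemma mf_hx: "mf (hx n a) = fact (n - mdeg a) * mf a"
  unfolding mf_opt by simp
lemma hx_res: assumes "mdeg A = n" shows "hx n (res A) = A"
proof (rule ext)
  fix x show "hx n (res A) x = A x"
    using assms unfolding mdeg_opt by (cases x) (auto simp: hx_def res_def)
qed
lemma inj_hx: "inj (hx n)"
  by (metis injI res_hx)
lemma hom_H: "hom n (H n f)"
  unfolding hom_def H_def by auto
lemma mdeg_diff: assumes "A \<le> C" shows "mdeg (C - A) = mdeg C - mdeg A"
proof -
  have "C = A + (C - A)" using assms by (simp add: le_fun_def fun_eq_iff)
  then have "mdeg C = mdeg A + mdeg (C - A)" by (metis mdeg_add)
  then show ?thesis by simp
qed

lemma res_diff: "res (C - A) = res C - res A"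
  by (simp add: res_def fun_diff_def)
lemma le_res: "A \<le> C \<Longrightarrow> res A \<le> res C"
  by (simp add: res_def le_fun_def)
lemma mdeg_le: "A \<le> C \<Longrightarrow> mdeg A \<le> mdeg C"
  unfolding mdeg_def le_fun_def by (intro sum_mono) auto

lemma hconv:
  fixes f g :: "('v::finite \<Rightarrow> nat) \<Rightarrow> complex"
  assumes lf: "lowdeg n f" and lg: "lowdeg m g"
  shows "conv (H n f) (H m g) C = H (n+m) (conv f g) C"
proof (cases "mdeg C = n+m")
  case False
  have z: "H n f A * H m g (C - A) = 0" if "A \<in> dn C" for A
  proof (rule ccontr)
    assume "H n f A * H m g (C - A) \<noteq> 0"
    then have "mdeg A = n" "mdeg (C - A) = m" unfolding H_def by (auto split: if_splits)
    moreover have "A \<le> C" using that by (simp add: dn_def)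
    ultimately have "mdeg C = n + m" using mdeg_diff[OF \<open>A \<le> C\<close>] mdeg_le[OF \<open>A \<le> C\<close>] by simp
    with False show False by simp
  qed
  have "conv (H n f) (H m g) C = 0" unfolding conv_def by (rule sum.neutral) (use z in blast)
  moreover have "H (n+m) (conv f g) C = 0" unfolding H_def using False by simp
  ultimately show ?thesis by simp
next
  case True
  define c where "c = res C"
  define S where "S = {a \<in> dn c. mdeg a \<le> n \<and> mdeg (c - a) \<le> m}"
  define h where "h A = H n f A * H m g (C - A)" for A
  have CN: "C None + mdeg c = n + m" using True unfolding mdeg_opt c_def .
  have sub: "hx n a \<le> C" if "a \<in> S" for a
  proof -
    have a: "a \<le> c" "mdeg a \<le> n" "mdeg (c - a) \<le> m" using that unfolding S_def dn_def by auto
    have "mdeg (c - a) = mdeg c - mdeg a" "mdeg a \<le> mdeg c" using mdeg_diff[OF a(1)] mdeg_le[OF a(1)] by auto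
    then have "n - mdeg a \<le> C None" using a CN by arith
    show ?thesis unfolding le_fun_def
    proof
      fix x show "hx n a x \<le> C x"
      proof (cases x)
        case None then show ?thesis using \<open>n - mdeg a \<le> C None\<close> by simp
      next
        case (Some v) then show ?thesis using a(1) unfolding le_fun_def c_def res_def hx_def by simp
      qed
    qed
  qed
  have "conv (H n f) (H m g) C = sum h (dn C)" unfolding conv_def h_def ..
  also have "\<dots> = sum h (hx n ` S)"
  proof (rule sum.mono_neutral_right)
    show "finite (dn C)" by simp
    show "hx n ` S \<subseteq> dn C" using sub by (auto simp: dn_def)
    show "\<forall>A\<in>dn C - hx n ` S. h A = 0"
    proof (rule ballI, rule ccontr)
      fix A assume A: "A \<in> dn C - hx n ` S" and hA: "h A \<noteq> 0"
      then have d: "mdeg A = n" "mdeg (C - A) = m" "f (res A) \<noteq> 0" "g (res (C - A)) \<noteq> 0"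
        unfolding h_def H_def by (auto split: if_splits)
      have AC: "A \<le> C" using A by (simp add: dn_def)
      have "res A \<in> S" unfolding S_def dn_def c_def
        using le_res[OF AC] lf lg d(3,4) unfolding lowdeg_def res_diff by auto
      then have "A \<in> hx n ` S" using hx_res[OF d(1)] by (metis image_eqI)
      with A show False by blast
    qed
  qed
  also have "\<dots> = sum (h \<circ> hx n) S"
    by (rule sum.reindex) (rule inj_on_subset[OF inj_hx], simp)
  also have "\<dots> = (\<Sum>a\<in>S. f a * g (c - a))"
  proof (rule sum.cong[OF refl])
    fix a assume aS: "a \<in> S"
    have a: "mdeg a \<le> n" using aS unfolding S_def by auto
    have m1: "mdeg (hx n a) = n" using mdeg_hx[OF a] .
    have "mdeg (C - hx n a) = m" using mdeg_diff[OF sub[OF aS]] m1 True by simp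
    moreover have "res (C - hx n a) = c - a" unfolding res_diff c_def by simp
    ultimately show "(h \<circ> hx n) a = f a * g (c - a)"
      unfolding h_def H_def comp_def using m1 by simp
  qed
  also have "\<dots> = (\<Sum>a\<in>dn c. f a * g (c - a))"
  proof (rule sum.mono_neutral_left)
    show "finite (dn c)" by simp
    show "S \<subseteq> dn c" unfolding S_def by auto
    show "\<forall>a\<in>dn c - S. f a * g (c - a) = 0"
      using lf lg unfolding S_def lowdeg_def by auto
  qed
  also have "\<dots> = H (n+m) (conv f g) C" unfolding H_def conv_def c_def using True by simp
  finally show ?thesis .
qed

lemma lowdeg_conv: assumes "lowdeg n f" "lowdeg m g" shows "lowdeg (n+m) (conv f g)"
  unfolding lowdeg_def
proof (intro allI impI)
  fix c assume "conv f g c \<noteq> 0"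
  then obtain a where a: "a \<in> dn c" "f a * g (c - a) \<noteq> 0" unfolding conv_def
    by (meson sum.not_neutral_contains_not_neutral)
  have ac: "a \<le> c" using a(1) by (simp add: dn_def)
  have "mdeg c = mdeg a + mdeg (c - a)" using mdeg_diff[OF ac] mdeg_le[OF ac] by simp
  then show "mdeg c \<le> n + m" using a(2) assms unfolding lowdeg_def by fastforce
qed


lemma hx_bx: assumes "a \<in> bx n" shows "hx n a \<in> bx n"
  unfolding bx_def mem_Collect_eq
proof
  fix x show "hx n a x \<le> n" using assms unfolding bx_def by (cases x) (auto simp: hx_def)
qed

lemma nrm_H_ge:
  fixes f :: "('v::finite \<Rightarrow> nat) \<Rightarrow> complex"
  assumes lf: "lowdeg n f" shows "nrm n f \<le> nrm n (H n f)"
proof -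
  define T :: "('v \<Rightarrow> nat) set" where "T = {a \<in> bx n. mdeg a \<le> n}"
  have "nrm n f = (\<Sum>a\<in>T. mf a * (cmod (f a))^2)" unfolding nrm_def
  proof (rule sum.mono_neutral_right)
    show "finite (bx n :: ('v \<Rightarrow> nat) set)" by simp
    show "T \<subseteq> bx n" unfolding T_def by blast
    show "\<forall>a\<in>bx n - T. mf a * (cmod (f a))^2 = 0" using lf unfolding T_def lowdeg_def by auto
  qed
  also have "\<dots> \<le> (\<Sum>a\<in>T. mf (hx n a) * (cmod (H n f (hx n a)))^2)"
  proof (rule sum_mono)
    fix a assume "a \<in> T"
    then have a: "mdeg a \<le> n" unfolding T_def by blast
    have "H n f (hx n a) = f a" unfolding H_def using mdeg_hx[OF a] by simp
    moreover have "mf a \<le> mf (hx n a)" unfolding mf_hx using mf_pos[of a]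
      by (simp add: mult_le_cancel_right1 fact_ge_1)
    ultimately show "mf a * (cmod (f a))^2 \<le> mf (hx n a) * (cmod (H n f (hx n a)))^2"
      by (simp add: mult_right_mono)
  qed
  also have "\<dots> = (\<Sum>A\<in>hx n ` T. mf A * (cmod (H n f A))^2)"
    by (rule sum.reindex[symmetric, unfolded comp_def]) (rule inj_on_subset[OF inj_hx], simp)
  also have "\<dots> \<le> nrm n (H n f)" unfolding nrm_def
  proof (rule sum_mono2)
    show "finite (bx n :: ('v option \<Rightarrow> nat) set)" by simp
    show "hx n ` T \<subseteq> bx n" using hx_bx unfolding T_def by blast
    show "\<And>b. b \<in> bx n - hx n ` T \<Longrightarrow> 0 \<le> mf b * (cmod (H n f b))\<^sup>2"
      by (intro mult_nonneg_nonneg) (simp_all add: less_imp_le[OF mf_pos])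
  qed
  finally show ?thesis .
qed

lemma nrm_H_le:
  fixes F :: "('v::finite \<Rightarrow> nat) \<Rightarrow> complex"
  assumes lF: "lowdeg N F" shows "nrm N (H N F) \<le> fact N * nrm N F"
proof -
  define T :: "('v \<Rightarrow> nat) set" where "T = {a \<in> bx N. mdeg a \<le> N}"
  have "nrm N (H N F) = (\<Sum>A\<in>hx N ` T. mf A * (cmod (H N F A))^2)" unfolding nrm_def
  proof (rule sum.mono_neutral_right)
    show "finite (bx N :: ('v option \<Rightarrow> nat) set)" by simp
    show "hx N ` T \<subseteq> bx N" using hx_bx unfolding T_def by blast
    show "\<forall>A\<in>bx N - hx N ` T. mf A * (cmod (H N F A))^2 = 0"
    proof (rule ballI, rule ccontr)
      fix A assume A: "A \<in> bx N - hx N ` T" and nz: "mf A * (cmod (H N F A))^2 \<noteq> 0"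
      then have d: "mdeg A = N" unfolding H_def by (auto split: if_splits)
      have "res A \<in> bx N" using A unfolding bx_def res_def by auto
      moreover have "mdeg (res A) \<le> N" using d unfolding mdeg_opt by simp
      ultimately have "res A \<in> T" unfolding T_def by blast
      then have "A \<in> hx N ` T" using hx_res[OF d] by (metis image_eqI)
      with A show False by blast
    qed
  qed
  also have "\<dots> = (\<Sum>a\<in>T. mf (hx N a) * (cmod (H N F (hx N a)))^2)"
    by (rule sum.reindex[unfolded comp_def]) (rule inj_on_subset[OF inj_hx], simp)
  also have "\<dots> \<le> (\<Sum>a\<in>T. fact N * (mf a * (cmod (F a))^2))"
  proof (rule sum_mono)
    fix a assume "a \<in> T"
    then have a: "mdeg a \<le> N" unfolding T_def by blast
    have "H N F (hx N a) = F a" unfolding H_def using mdeg_hx[OF a] by simp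
    moreover have "mf (hx N a) \<le> fact N * mf a" unfolding mf_hx using mf_pos[of a]
      by (intro mult_right_mono fact_mono) auto
    ultimately show "mf (hx N a) * (cmod (H N F (hx N a)))^2 \<le> fact N * (mf a * (cmod (F a))^2)"
      by (simp add: mult_right_mono mult.assoc[symmetric])
  qed
  also have "\<dots> = fact N * nrm N F" unfolding nrm_def sum_distrib_left[symmetric]
  proof (rule arg_cong[where f="\<lambda>x. fact N * x"], rule sum.mono_neutral_left)
    show "finite (bx N :: ('v \<Rightarrow> nat) set)" by simp
    show "T \<subseteq> bx N" unfolding T_def by blast
    show "\<forall>a\<in>bx N - T. mf a * (cmod (F a))^2 = 0" using lF unfolding T_def lowdeg_def by auto
  qed
  finally show ?thesis .
qed

definition delta0 :: "('v::finite \<Rightarrow> nat) \<Rightarrow> complex" where "delta0 a = (if a = 0 then 1 else 0)"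

primrec Gs :: "(nat \<Rightarrow> ('v::finite \<Rightarrow> nat) \<Rightarrow> complex) \<Rightarrow> nat \<Rightarrow> ('v \<Rightarrow> nat) \<Rightarrow> complex" where
  "Gs f 0 = delta0"
| "Gs f (Suc s) = conv (Gs f s) (f s)"

lemma bx0: "bx 0 = {0}"
  by (auto simp: bx_def fun_eq_iff)

lemma mdeg0: "mdeg 0 = 0" unfolding mdeg_def by simp
lemma res0: "res 0 = 0" unfolding res_def by (simp add: fun_eq_iff)

lemma chain:
  fixes f :: "nat \<Rightarrow> ('v::finite \<Rightarrow> nat) \<Rightarrow> complex"
  assumes "\<And>i. i < s \<Longrightarrow> lowdeg (n i) (f i)"
  shows "lowdeg (\<Sum>i<s. n i) (Gs f s) \<and>
    (\<Prod>i<s. nrm (n i) (H (n i) (f i))) \<le> nrm (\<Sum>i<s. n i) (H (\<Sum>i<s. n i) (Gs f s))"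
  using assms
proof (induction s)
  case 0
  have l: "lowdeg 0 (delta0 :: ('v \<Rightarrow> nat) \<Rightarrow> complex)" unfolding lowdeg_def delta0_def by (simp add: mdeg0)
  have "nrm 0 (H 0 (delta0 :: ('v \<Rightarrow> nat) \<Rightarrow> complex)) = 1"
    unfolding nrm_def bx0 H_def delta0_def by (simp add: mdeg0 mf_zero res0)
  then show ?case using l by simp
next
  case (Suc s)
  define N where "N = (\<Sum>i<s. n i)"
  have IH: "lowdeg N (Gs f s)" "(\<Prod>i<s. nrm (n i) (H (n i) (f i))) \<le> nrm N (H N (Gs f s))"
    using Suc unfolding N_def by auto
  have ls: "lowdeg (n s) (f s)" using Suc.prems by simp
  have eqH: "H (N + n s) (conv (Gs f s) (f s)) = conv (H N (Gs f s)) (H (n s) (f s))"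
    by (rule ext) (rule hconv[OF IH(1) ls, symmetric])
  have "(\<Prod>i<Suc s. nrm (n i) (H (n i) (f i))) = (\<Prod>i<s. nrm (n i) (H (n i) (f i))) * nrm (n s) (H (n s) (f s))"
    by simp
  also have "\<dots> \<le> nrm N (H N (Gs f s)) * nrm (n s) (H (n s) (f s))"
    by (rule mult_right_mono[OF IH(2) nrm_nonneg])
  also have "\<dots> \<le> nrm (N + n s) (conv (H N (Gs f s)) (H (n s) (f s)))"
    by (rule core[OF hom_H hom_H])
  finally show ?case using lowdeg_conv[OF IH(1) ls] eqH unfolding N_def by simp
qed


definition pm :: "('v::finite \<Rightarrow> nat) \<Rightarrow> ('v \<Rightarrow>\<^sub>0 nat)" where "pm a = Abs_poly_mapping a"
lemma lookup_pm[simp]: "Poly_Mapping.lookup (pm (a::'v::finite \<Rightarrow> nat)) = a"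
  unfolding pm_def by (rule lookup_Abs_poly_mapping) simp
lemma pm_lookup[simp]: "pm (Poly_Mapping.lookup k) = (k :: 'v::finite \<Rightarrow>\<^sub>0 nat)"
  unfolding pm_def by simp
lemma bij_pm: "bij (pm :: ('v::finite \<Rightarrow> nat) \<Rightarrow> _)"
  by (rule o_bij[where g=Poly_Mapping.lookup]) (auto simp: fun_eq_iff)
lemma pm_eq_iff: "(pm a = k) \<longleftrightarrow> (a = Poly_Mapping.lookup k)"
  by (metis lookup_pm pm_lookup)

definition cf :: "'v::finite mpoly \<Rightarrow> ('v \<Rightarrow> nat) \<Rightarrow> complex" where "cf P a = Poly_Mapping.lookup P (pm a)"

lemma cf_mult: "cf (P * Q) c = conv (cf P) (cf Q) c"
proof -
  have inner: "(\<Sum>q. Poly_Mapping.lookup Q q when pm c = l + q) = (if Poly_Mapping.lookup l \<le> c then cf Q (c - Poly_Mapping.lookup l) else 0)" for l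
  proof -
    have "(\<lambda>q. Poly_Mapping.lookup Q q when pm c = l + q) =
          (\<lambda>q. if q = pm (c - Poly_Mapping.lookup l) then (if Poly_Mapping.lookup l \<le> c then Poly_Mapping.lookup Q q else 0) else 0)"
    proof (rule ext)
      fix q
      have "(pm c = l + q) \<longleftrightarrow> c = Poly_Mapping.lookup l + Poly_Mapping.lookup q"
        unfolding pm_eq_iff by (simp add: fun_eq_iff lookup_add)
      also have "\<dots> \<longleftrightarrow> Poly_Mapping.lookup l \<le> c \<and> Poly_Mapping.lookup q = c - Poly_Mapping.lookup l"
        by (auto simp: fun_eq_iff le_fun_def)
      also have "\<dots> \<longleftrightarrow> Poly_Mapping.lookup l \<le> c \<and> q = pm (c - Poly_Mapping.lookup l)"
        by (metis lookup_pm pm_lookup)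
      finally show "(Poly_Mapping.lookup Q q when pm c = l + q) =
          (if q = pm (c - Poly_Mapping.lookup l) then (if Poly_Mapping.lookup l \<le> c then Poly_Mapping.lookup Q q else 0) else 0)"
        by (auto simp: when_def)
    qed
    then have "(\<Sum>q. Poly_Mapping.lookup Q q when pm c = l + q) =
      (\<Sum>q. if q = pm (c - Poly_Mapping.lookup l) then (if Poly_Mapping.lookup l \<le> c then Poly_Mapping.lookup Q q else 0) else 0)"
      by (rule arg_cong[where f=Sum_any])
    then show ?thesis by (simp add: cf_def)
  qed
  have "cf (P * Q) c = (\<Sum>l. Poly_Mapping.lookup P l * (if Poly_Mapping.lookup l \<le> c then cf Q (c - Poly_Mapping.lookup l) else 0))"
    unfolding cf_def lookup_mult inner[unfolded cf_def] ..
  also have "\<dots> = (\<Sum>a. cf P a * (if a \<le> c then cf Q (c - a) else 0))"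
    by (rule Sum_any.reindex_cong[OF bij_pm]) (rule ext, simp only: comp_def lookup_pm cf_def)
  also have "\<dots> = (\<Sum>a\<in>dn c. cf P a * (if a \<le> c then cf Q (c - a) else 0))"
    by (rule Sum_any.expand_superset) (simp, auto simp: dn_def)
  also have "\<dots> = conv (cf P) (cf Q) c"
    unfolding conv_def by (rule sum.cong) (auto simp: dn_def)
  finally show ?thesis .
qed

lemma cf_one: "cf (1 :: 'v::finite mpoly) = delta0"
proof (rule ext)
  fix a :: "'v \<Rightarrow> nat"
  have "(pm a = 0) \<longleftrightarrow> a = 0" unfolding pm_eq_iff by (simp add: fun_eq_iff)
  then show "cf 1 a = delta0 a" unfolding cf_def delta0_def lookup_one by (simp add: when_def)
qed

lemma cf_prod: "cf (\<Prod>i<s. P i) = Gs (\<lambda>i. cf (P i)) s"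
proof (induction s)
  case 0 then show ?case by (simp add: cf_one)
next
  case (Suc s) show ?case
    unfolding prod.lessThan_Suc Gs.simps Suc.IH[symmetric] by (rule ext, rule cf_mult)
qed

lemma keys_pm: "Poly_Mapping.keys (pm a) = {v. a v \<noteq> 0}"
  by (auto simp: in_keys_iff)

lemma mi_fact_pm: "real (mi_fact (pm a)) = mf a"
proof -
  have "real (mi_fact (pm a)) = (\<Prod>v\<in>Poly_Mapping.keys (pm a). fact (a v))"
    unfolding mi_fact_def by simp
  also have "\<dots> = mf a" unfolding mf_def
    by (rule prod.mono_neutral_left) (auto simp: keys_pm)
  finally show ?thesis .
qed

lemma mi_fact_pm_c: "(of_nat (mi_fact (pm a)) :: complex) = of_real (mf a)"
  using mi_fact_pm[of a] by (metis of_real_of_nat_eq)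

lemma mi_deg_pm: "mi_deg (pm a) = mdeg a"
  unfolding mi_deg_def mdeg_def by simp (rule sum.mono_neutral_left, auto simp: keys_pm)

lemma lowdeg_cf: "lowdeg (total_degree P) (cf P)"
  unfolding lowdeg_def
proof (intro allI impI)
  fix a assume "cf P a \<noteq> 0"
  then have "pm a \<in> Poly_Mapping.keys P" unfolding cf_def by (simp add: in_keys_iff)
  then have "mi_deg (pm a) \<in> insert 0 (mi_deg ` Poly_Mapping.keys P)" by blast
  then have "mi_deg (pm a) \<le> total_degree P" unfolding total_degree_def
    by (intro Max_ge) auto
  then show "mdeg a \<le> total_degree P" by (simp add: mi_deg_pm)
qed

lemma norm_cf: assumes "lowdeg n (cf P)" shows "(apolar_norm P)^2 = nrm n (cf P)"
proof -
  define KP where "KP = {a. cf P a \<noteq> 0}"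
  have kk: "Poly_Mapping.keys P = pm ` KP"
  proof
    show "Poly_Mapping.keys P \<subseteq> pm ` KP"
    proof
      fix k assume "k \<in> Poly_Mapping.keys P"
      then have "Poly_Mapping.lookup k \<in> KP" unfolding KP_def cf_def by (simp add: in_keys_iff)
      then show "k \<in> pm ` KP" by (metis image_eqI pm_lookup)
    qed
    show "pm ` KP \<subseteq> Poly_Mapping.keys P" unfolding KP_def cf_def by (auto simp: in_keys_iff)
  qed
  have "apolar_inner P P = (\<Sum>k\<in>Poly_Mapping.keys P. complex_of_real (real (mi_fact k) * (cmod (Poly_Mapping.lookup P k))^2))"
    unfolding apolar_inner_def Un_absorb
    by (intro sum.cong refl) (simp only: of_real_mult complex_norm_square of_real_of_nat_eq mult.assoc)
  also have "\<dots> = (\<Sum>a\<in>KP. complex_of_real (mf a * (cmod (cf P a))^2))"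
    unfolding kk by (subst sum.reindex) (auto intro: inj_on_subset[OF bij_is_inj[OF bij_pm]] simp: mi_fact_pm mi_fact_pm_c cf_def)
  finally have e1: "apolar_inner P P = (\<Sum>a\<in>KP. complex_of_real (mf a * (cmod (cf P a))^2))" .
  have e2: "(\<Sum>a\<in>KP. mf a * (cmod (cf P a))^2) = nrm n (cf P)" unfolding nrm_def
  proof (rule sum.mono_neutral_left)
    show "finite (bx n :: ('a \<Rightarrow> nat) set)" by simp
    show "KP \<subseteq> bx n" using assms le_mdeg unfolding KP_def lowdeg_def bx_def
      by (auto intro: le_trans)
    show "\<forall>a\<in>bx n - KP. mf a * (cmod (cf P a))^2 = 0" unfolding KP_def by auto
  qed
  have "apolar_inner P P = complex_of_real (nrm n (cf P))" unfolding e1 e2[symmetric] of_real_sum ..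
  then show ?thesis unfolding apolar_norm_def using nrm_nonneg by simp
qed



theorem theorem3p1:
  fixes P :: "nat \<Rightarrow> ('v::finite) mpoly" and n :: "nat \<Rightarrow> nat" and s :: nat
  assumes "s \<ge> 1"
    and "\<And>i. i < s \<Longrightarrow> P i \<noteq> 0"
    and "\<And>i. i < s \<Longrightarrow> total_degree (P i) = n i"
  shows "fact (\<Sum>i<s. n i) * (apolar_norm (\<Prod>i<s. P i))\<^sup>2
           \<ge> (\<Prod>i<s. (apolar_norm (P i))\<^sup>2)"
proof -
  define f where "f i = cf (P i)" for i
  define N where "N = (\<Sum>i<s. n i)"
  have lf: "lowdeg (n i) (f i)" if "i < s" for i
    using lowdeg_cf[of "P i"] assms(3)[OF that] unfolding f_def by simp
  have G: "cf (\<Prod>i<s. P i) = Gs f s" unfolding f_def by (rule cf_prod)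
  have c: "lowdeg N (Gs f s) \<and> (\<Prod>i<s. nrm (n i) (H (n i) (f i))) \<le> nrm N (H N (Gs f s))"
    unfolding N_def by (rule chain) (rule lf)
  have nP: "(apolar_norm (\<Prod>i<s. P i))^2 = nrm N (Gs f s)"
    using norm_cf[of N "\<Prod>i<s. P i"] c G by simp
  have nPi: "(apolar_norm (P i))^2 = nrm (n i) (f i)" if "i < s" for i
    using norm_cf[of "n i" "P i"] lf[OF that] unfolding f_def by simp
  have "(\<Prod>i<s. (apolar_norm (P i))^2) = (\<Prod>i<s. nrm (n i) (f i))"
    by (rule prod.cong) (simp_all add: nPi)
  also have "\<dots> \<le> (\<Prod>i<s. nrm (n i) (H (n i) (f i)))"
    by (rule prod_mono) (auto intro: nrm_nonneg nrm_H_ge lf)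
  also have "\<dots> \<le> nrm N (H N (Gs f s))" using c by blast
  also have "\<dots> \<le> fact N * nrm N (Gs f s)" using c by (intro nrm_H_le) blast
  also have "\<dots> = fact N * (apolar_norm (\<Prod>i<s. P i))^2" using nP by simp
  finally show ?thesis unfolding N_def .
qed


end
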